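(* Let $\Omega$ be a measurable space with reference measure $\mathrm{d}\mathbf{y}$, let $q$ be a probability density on $\Omega$, and let $f_{\bm{\theta}}:\Omega\to\mathbb{R}$, $\bm{\theta}\in\Theta$, satisfy $|f_{\bm{\theta}}(\mathbf{y})-\log q(\mathbf{y})|\le C$ for all $\mathbf{y}\in\Omega$ and all $\bm{\theta}\in\Theta$. Fix data $\mathbf{y}_1,\ldots,\mathbf{y}_n\in\Omega$, an integer $m\ge1$ and reference points $\bm{r}_1,\ldots,\bm{r}_m\in\Omega$, and define $$\mathcal{M}(\bm{\theta},\nu)=\sum_{i=1}^n\{f_{\bm{\theta}}(\mathbf{y}_i)+\nu\}-n\int_\Omega\exp\{f_{\bm{\theta}}(\mathbf{y})+\nu\}\,\mathrm{d}\mathbf{y},$$ $$\mathcal{R}^m(\bm{\theta},\nu)=\sum_{i=1}^n\log\left[\frac{n\exp\{f_{\bm{\theta}}(\mathbf{y}_i)+\nu\}}{n\exp\{f_{\bm{\theta}}(\mathbf{y}_i)+\nu\}+mq(\mathbf{y}_i)}\right]+\sum_{j=1}^m\log\left[\frac{mq(\bm{r}_j)}{n\exp\{f_{\bm{\theta}}(\bm{r}_j)+\nu\}+mq(\bm{r}_j)}\right].$$ Then there exists a bounded interval $I\subset\mathbb{R}$ such that, for every $\bm{\theta}\in\Theta$, the maximum of both functions $\nu\mapsto\mathcal{M}(\bm{\theta},\nu)$ and $\nu\mapsto\mathcal{R}^m(\bm{\theta},\nu)$ is attained in $I$. *)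

theory Defs
  imports "HOL-Analysis.Analysis"
begin

definition Mobj :: "'a measure \<Rightarrow> ('a \<Rightarrow> real) \<Rightarrow> nat \<Rightarrow> (nat \<Rightarrow> 'a) \<Rightarrow> real \<Rightarrow> real" where
  "Mobj Mu g n y \<nu> =
     (\<Sum>i = 1..n. g (y i) + \<nu>) - real n * (\<integral>x. exp (g x + \<nu>) \<partial>Mu)"

definition Robj :: "('a \<Rightarrow> real) \<Rightarrow> ('a \<Rightarrow> real) \<Rightarrow> nat \<Rightarrow> (nat \<Rightarrow> 'a) \<Rightarrow> nat \<Rightarrow> (nat \<Rightarrow> 'a) \<Rightarrow> real \<Rightarrow> real" where
  "Robj q g n y m r \<nu> =
     (\<Sum>i = 1..n. ln (real n * exp (g (y i) + \<nu>) /
                     (real n * exp (g (y i) + \<nu>) + real m * q (y i))))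
   + (\<Sum>j = 1..m. ln (real m * q (r j) /
                     (real n * exp (g (r j) + \<nu>) + real m * q (r j))))"

end

theory Submission
  imports Defs
begin

lemma ln_le_of_le_exp: "(0::real) < X \<Longrightarrow> X \<le> exp K \<Longrightarrow> ln X \<le> K"
  by (metis ln_exp ln_le_cancel_iff exp_gt_zero)

lemma ge_ln_of_exp_le: "exp K \<le> (X::real) \<Longrightarrow> K \<le> ln X"
  by (metis ln_exp ln_le_cancel_iff exp_gt_zero order_less_le_trans)

lemma M_part:
  fixes Mu :: "'a measure" and q g :: "'a \<Rightarrow> real"
  assumes q_meas: "q \<in> borel_measurable Mu"
    and q_pos: "\<And>x. x \<in> space Mu \<Longrightarrow> q x > 0"
    and q_prob: "(\<integral>\<^sup>+ x. ennreal (q x) \<partial>Mu) = 1"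
    and g_meas: "g \<in> borel_measurable Mu"
    and g_bound: "\<And>x. x \<in> space Mu \<Longrightarrow> \<bar>g x - ln (q x)\<bar> \<le> C"
  shows "\<exists>\<nu>\<in>{-C..C}. \<forall>\<nu>'. Mobj Mu g n y \<nu>' \<le> Mobj Mu g n y \<nu>"
proof -
  have qi: "integrable Mu q"
    by (rule integrableI_nn_integral_finite[where x=1]) (use q_meas q_pos q_prob in \<open>auto intro!: AE_I2 less_imp_le\<close>)
  have "ennreal (integral\<^sup>L Mu q) = 1"
    using nn_integral_eq_integral[OF qi] q_pos q_prob by (auto intro!: AE_I2 less_imp_le)
  moreover have "integral\<^sup>L Mu q \<ge> 0" using q_pos by (intro integral_nonneg_AE) (auto intro!: AE_I2 less_imp_le)
  ultimately have q1: "integral\<^sup>L Mu q = 1"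
    by (metis ennreal_1 ennreal_inj zero_le_one)
  have eb: "exp (-C) * q x \<le> exp (g x) \<and> exp (g x) \<le> exp C * q x" if x: "x \<in> space Mu" for x
  proof -
    have "exp (g x) = exp (g x - ln (q x)) * q x" using q_pos[OF x] by (simp add: exp_diff)
    moreover have "exp (-C) \<le> exp (g x - ln (q x))" "exp (g x - ln (q x)) \<le> exp C"
      using g_bound[OF x] by auto
    ultimately show ?thesis using q_pos[OF x] by (auto intro: mult_right_mono)
  qed
  have ei: "integrable Mu (\<lambda>x. exp (g x))"
  proof (rule Bochner_Integration.integrable_bound[OF integrable_mult_right[OF qi, of "exp C"]])
    show "(\<lambda>x. exp (g x)) \<in> borel_measurable Mu" using g_meas by measurable
    show "AE x in Mu. norm (exp (g x)) \<le> norm (exp C * q x)"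
      using eb q_pos by (auto intro!: AE_I2 simp: abs_of_pos)
  qed
  define I where "I = integral\<^sup>L Mu (\<lambda>x. exp (g x))"
  have "exp (-C) * 1 \<le> I"
    unfolding I_def q1[symmetric] integral_mult_right_zero[symmetric]
    by (rule integral_mono) (use qi ei eb in auto)
  moreover have "I \<le> exp C * 1"
    unfolding I_def q1[symmetric] integral_mult_right_zero[symmetric]
    by (rule integral_mono) (use qi ei eb in auto)
  ultimately have Ipos: "I > 0" and Ib: "-C \<le> ln I" "ln I \<le> C"
  proof -
    assume a: "exp (-C) * 1 \<le> I" "I \<le> exp C * 1"
    show Ipos: "I > 0" using a exp_gt_zero[of "-C"] by linarith
    show "-C \<le> ln I" using a by (intro ge_ln_of_exp_le) simp
    show "ln I \<le> C" using a Ipos by (intro ln_le_of_le_exp) simp_all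
  qed
  have Mform: "Mobj Mu g n y v = (\<Sum>i = 1..n. g (y i)) + real n * v - real n * (exp v * I)" for v
  proof -
    have "(\<integral>x. exp (g x + v) \<partial>Mu) = exp v * I"
      unfolding I_def integral_mult_right_zero[symmetric] by (simp add: exp_add mult.commute)
    then show ?thesis unfolding Mobj_def by (simp add: sum.distrib)
  qed
  show ?thesis
  proof (intro bexI allI)
    fix v
    have "1 + (v + ln I) \<le> exp (v + ln I)" by (rule exp_ge_add_one_self)
    also have "\<dots> = exp v * I" using Ipos by (simp add: exp_add)
    finally have "v - exp v * I \<le> - ln I - exp (- ln I) * I" using Ipos by (simp add: exp_minus)
    then have "real n * (v - exp v * I) \<le> real n * (- ln I - exp (- ln I) * I)"
      by (intro mult_left_mono) auto
    then show "Mobj Mu g n y v \<le> Mobj Mu g n y (- ln I)"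
      unfolding Mform by (simp add: algebra_simps)
  qed (use Ib in auto)
qed

lemma eb_pt:
  assumes "(qx::real) > 0" "\<bar>gx - ln qx\<bar> \<le> C"
  shows "exp (-C) * qx \<le> exp gx" "exp gx \<le> exp C * qx"
proof -
  have e: "exp gx = exp (gx - ln qx) * qx" using assms by (simp add: exp_diff)
  have "exp (-C) \<le> exp (gx - ln qx)" "exp (gx - ln qx) \<le> exp C" using assms by auto
  then show "exp (-C) * qx \<le> exp gx" "exp gx \<le> exp C * qx"
    unfolding e using assms(1) by (auto intro: mult_right_mono)
qed

lemma T1_le0:
  assumes "A > 0" "B > 0" shows "ln (A / (A + B)) \<le> (0::real)"
  using assms by (intro ln_le_of_le_exp) auto

lemma T2_le0:
  assumes "A > 0" "B > 0" shows "ln (B / (A + B)) \<le> (0::real)"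
  using assms by (intro ln_le_of_le_exp) auto

lemma frac_aux:
  fixes A B X :: real
  assumes "A > 0" "B > 0" "X \<ge> 0" "B \<le> A * X"
  shows "1 / (1 + X) \<le> A / (A + B)"
proof -
  have "A + B \<le> A * (1 + X)" using assms by (simp add: algebra_simps)
  then show ?thesis using assms by (simp add: divide_simps mult.commute)
qed

lemma T1_lower:
  fixes n m :: nat
  assumes "n \<ge> 1" "m \<ge> 1" "(qx::real) > 0" "\<bar>gx - ln qx\<bar> \<le> C"
  shows "- ln (1 + real m * exp C) \<le> ln (real n * exp (gx + 0) / (real n * exp (gx + 0) + real m * qx))"
proof (rule ge_ln_of_exp_le)
  have e1: "exp (-C) * qx \<le> exp gx" using eb_pt[OF assms(3,4)] by simp
  have "qx \<le> exp gx * exp C" using e1 by (simp add: exp_minus field_simps)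
  also have "\<dots> \<le> real n * exp gx * exp C" using assms(1) by simp
  finally have k: "real m * qx \<le> real n * exp gx * (real m * exp C)"
    using assms(2) by (metis mult.commute mult.left_commute mult_le_cancel_left_pos of_nat_0_less_iff less_le_trans zero_less_one)
  have pos: "real n * exp gx > 0" using assms by simp
  have "exp (- ln (1 + real m * exp C)) = 1 / (1 + real m * exp C)"
    by (simp add: exp_minus exp_ln add_pos_nonneg inverse_eq_divide)
  also have "\<dots> \<le> real n * exp gx / (real n * exp gx + real m * qx)"
    using pos k assms by (intro frac_aux) (auto simp: mult.assoc)
  finally show "exp (- ln (1 + real m * exp C)) \<le> real n * exp (gx + 0) / (real n * exp (gx + 0) + real m * qx)" by simp
qed

lemma T2_lower:
  fixes n m :: nat
  assumes "n \<ge> 1" "m \<ge> 1" "(qx::real) > 0" "\<bar>gx - ln qx\<bar> \<le> C"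
  shows "- ln (1 + real n * exp C) \<le> ln (real m * qx / (real n * exp (gx + 0) + real m * qx))"
proof (rule ge_ln_of_exp_le)
  have e1: "exp gx \<le> exp C * qx" using eb_pt[OF assms(3,4)] by simp
  also have "\<dots> \<le> real m * qx * exp C" using assms by simp
  finally have "real n * exp gx \<le> real n * (real m * qx * exp C)" by (intro mult_left_mono) auto
  then have k: "real n * exp gx \<le> real m * qx * (real n * exp C)" by (simp add: ac_simps)
  have "exp (- ln (1 + real n * exp C)) = 1 / (1 + real n * exp C)"
    by (simp add: exp_minus exp_ln add_pos_nonneg inverse_eq_divide)
  also have "\<dots> \<le> real m * qx / (real m * qx + real n * exp gx)"
    using k assms by (intro frac_aux) auto
  finally show "exp (- ln (1 + real n * exp C)) \<le> real m * qx / (real n * exp (gx + 0) + real m * qx)"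
    by (simp add: add.commute)
qed

lemma ub_aux:
  fixes A B K :: real
  assumes "A > 0" "B > 0" "A \<le> K * B"
  shows "A / (A + B) \<le> K"
proof -
  have "A / (A + B) \<le> A / B" using assms by (intro divide_left_mono) auto
  also have "\<dots> \<le> K" using assms by (simp add: divide_simps)
  finally show ?thesis .
qed

lemma T1_upper:
  fixes n m :: nat
  assumes "n \<ge> 1" "m \<ge> 1" "(qx::real) > 0" "\<bar>gx - ln qx\<bar> \<le> C"
  shows "ln (real n * exp (gx + v) / (real n * exp (gx + v) + real m * qx)) \<le> C + v + ln (real n)"
proof (rule ln_le_of_le_exp)
  show "0 < real n * exp (gx + v) / (real n * exp (gx + v) + real m * qx)"
    using assms by (intro divide_pos_pos add_pos_pos) auto
  have e1: "exp gx \<le> exp C * qx" using eb_pt[OF assms(3,4)] by simp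
  have "real n * exp (gx + v) = real n * exp v * exp gx" by (simp add: exp_add)
  also have "\<dots> \<le> real n * exp v * (exp C * qx)" using e1 by (intro mult_left_mono) auto
  also have "\<dots> \<le> real n * exp v * (exp C * (real m * qx))"
    using assms by (intro mult_left_mono) auto
  also have "\<dots> = exp (C + v + ln (real n)) * (real m * qx)"
    using assms by (simp add: exp_add ac_simps)
  finally show "real n * exp (gx + v) / (real n * exp (gx + v) + real m * qx) \<le> exp (C + v + ln (real n))"
    using assms by (intro ub_aux) auto
qed

lemma T2_upper:
  fixes n m :: nat
  assumes "n \<ge> 1" "m \<ge> 1" "(qx::real) > 0" "\<bar>gx - ln qx\<bar> \<le> C"
  shows "ln (real m * qx / (real n * exp (gx + v) + real m * qx)) \<le> C - v + ln (real m)"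
proof (rule ln_le_of_le_exp)
  show "0 < real m * qx / (real n * exp (gx + v) + real m * qx)"
    using assms by (intro divide_pos_pos add_pos_pos) auto
  have e1: "exp (-C) * qx \<le> exp gx" using eb_pt[OF assms(3,4)] by simp
  then have e2: "qx \<le> exp C * exp gx" by (simp add: exp_minus field_simps)
  have "real m * qx \<le> real m * (exp C * exp gx)" using e2 by (intro mult_left_mono) auto
  also have "\<dots> \<le> real m * (exp C * (real n * exp gx))"
    using assms by (intro mult_left_mono) auto
  also have "\<dots> = exp (C - v + ln (real m)) * (real n * exp (gx + v))"
    using assms by (simp add: exp_add exp_diff ac_simps)
  finally have k: "real m * qx \<le> exp (C - v + ln (real m)) * (real n * exp (gx + v))" .
  have "real m * qx / (real m * qx + real n * exp (gx + v)) \<le> exp (C - v + ln (real m))"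
    using assms k by (intro ub_aux) auto
  then show "real m * qx / (real n * exp (gx + v) + real m * qx) \<le> exp (C - v + ln (real m))"
    by (simp add: add.commute)
qed

lemma R_part:
  fixes q g :: "'a \<Rightarrow> real" and n m :: nat and y r :: "nat \<Rightarrow> 'a" and C :: real
  assumes n1: "n \<ge> 1" and m1: "m \<ge> 1" and C0: "C \<ge> 0"
    and yq: "\<And>i. i \<in> {1..n} \<Longrightarrow> q (y i) > 0"
    and yg: "\<And>i. i \<in> {1..n} \<Longrightarrow> \<bar>g (y i) - ln (q (y i))\<bar> \<le> C"
    and rq: "\<And>j. j \<in> {1..m} \<Longrightarrow> q (r j) > 0"
    and rg: "\<And>j. j \<in> {1..m} \<Longrightarrow> \<bar>g (r j) - ln (q (r j))\<bar> \<le> C"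
  shows "\<exists>\<nu>\<in>{-C - ln (real n) - (real n * ln (1 + real m * exp C) + real m * ln (1 + real n * exp C))
             .. C + ln (real m) + (real n * ln (1 + real m * exp C) + real m * ln (1 + real n * exp C))}.
           \<forall>\<nu>'. Robj q g n y m r \<nu>' \<le> Robj q g n y m r \<nu>"
proof -
  define L where "L = real n * ln (1 + real m * exp C) + real m * ln (1 + real n * exp C)"
  define a where "a = -C - ln (real n) - L"
  define b where "b = C + ln (real m) + L"
  define T1 where "T1 = (\<lambda>v i. ln (real n * exp (g (y i) + v) /
                     (real n * exp (g (y i) + v) + real m * q (y i))))"
  define T2 where "T2 = (\<lambda>v j. ln (real m * q (r j) /
                     (real n * exp (g (r j) + v) + real m * q (r j))))"
  define R where "R = Robj q g n y m r"
  have R_eq: "R v = (\<Sum>i = 1..n. T1 v i) + (\<Sum>j = 1..m. T2 v j)" for v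
    unfolding R_def Robj_def T1_def T2_def ..
  have T1n: "T1 v i \<le> 0" if "i \<in> {1..n}" for v i
    unfolding T1_def using yq[OF that] n1 m1 by (intro T1_le0) auto
  have T2n: "T2 v j \<le> 0" if "j \<in> {1..m}" for v j
    unfolding T2_def using rq[OF that] n1 m1 by (intro T2_le0) auto
  have L0: "L \<ge> 0" unfolding L_def by (intro add_nonneg_nonneg mult_nonneg_nonneg) auto
  have "(\<Sum>i = 1..n. - ln (1 + real m * exp C)) \<le> (\<Sum>i = 1..n. T1 0 i)"
    unfolding T1_def using n1 m1 yq yg by (intro sum_mono T1_lower) auto
  moreover have "(\<Sum>j = 1..m. - ln (1 + real n * exp C)) \<le> (\<Sum>j = 1..m. T2 0 j)"
    unfolding T2_def using n1 m1 rq rg by (intro sum_mono T2_lower) auto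
  ultimately have R0: "- L \<le> R 0" unfolding R_eq L_def by simp
  have RT1: "R v \<le> T1 v 1" for v
  proof -
    have "(\<Sum>i = 1..n. T1 v i) = T1 v 1 + (\<Sum>i \<in> {1..n} - {1}. T1 v i)"
      using n1 by (intro sum.remove) auto
    moreover have "(\<Sum>i \<in> {1..n} - {1}. T1 v i) \<le> 0" using T1n by (intro sum_nonpos) auto
    moreover have "(\<Sum>j = 1..m. T2 v j) \<le> 0" using T2n by (intro sum_nonpos) auto
    ultimately show ?thesis unfolding R_eq by linarith
  qed
  have RT2: "R v \<le> T2 v 1" for v
  proof -
    have "(\<Sum>j = 1..m. T2 v j) = T2 v 1 + (\<Sum>j \<in> {1..m} - {1}. T2 v j)"
      using m1 by (intro sum.remove) auto
    moreover have "(\<Sum>j \<in> {1..m} - {1}. T2 v j) \<le> 0" using T2n by (intro sum_nonpos) auto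
    moreover have "(\<Sum>i = 1..n. T1 v i) \<le> 0" using T1n by (intro sum_nonpos) auto
    ultimately show ?thesis unfolding R_eq by linarith
  qed
  have out: "R v \<le> R 0" if "v \<notin> {a..b}" for v
  proof (cases "v < a")
    case True
    have "T1 v 1 \<le> C + v + ln (real n)"
      unfolding T1_def using n1 m1 yq[of 1] yg[of 1] by (intro T1_upper) auto
    then show ?thesis using RT1[of v] R0 True unfolding a_def by linarith
  next
    case False
    then have "v > b" using that by auto
    have "T2 v 1 \<le> C - v + ln (real m)"
      unfolding T2_def using n1 m1 rq[of 1] rg[of 1] by (intro T2_upper) auto
    then show ?thesis using RT2[of v] R0 \<open>v > b\<close> unfolding b_def by linarith
  qed
  have ab: "a \<le> 0" "0 \<le> b" proof -
    have "ln (real n) \<ge> 0" "ln (real m) \<ge> 0" using n1 m1 by auto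
    then show "a \<le> 0" "0 \<le> b" unfolding a_def b_def using L0 C0 by auto
  qed
  have cont: "continuous_on {a..b} R"
    unfolding R_def Robj_def
  proof (intro continuous_intros ballI)
    fix x
    show "real n * exp (g (y i) + x) + real m * q (y i) \<noteq> 0" if "i \<in> {1..n}" for i
      using yq[OF that] n1 m1 by (intro order.strict_implies_not_eq[symmetric] add_pos_pos) auto
    show "real n * exp (g (y i) + x) / (real n * exp (g (y i) + x) + real m * q (y i)) \<noteq> 0" if "i \<in> {1..n}" for i
      using yq[OF that] n1 m1 by (intro order.strict_implies_not_eq[symmetric] divide_pos_pos add_pos_pos) auto
    show "real n * exp (g (r j) + x) + real m * q (r j) \<noteq> 0" if "j \<in> {1..m}" for j
      using rq[OF that] n1 m1 by (intro order.strict_implies_not_eq[symmetric] add_pos_pos) auto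
    show "real m * q (r j) / (real n * exp (g (r j) + x) + real m * q (r j)) \<noteq> 0" if "j \<in> {1..m}" for j
      using rq[OF that] n1 m1 by (intro order.strict_implies_not_eq[symmetric] divide_pos_pos add_pos_pos) auto
  qed
  obtain v where v: "v \<in> {a..b}" "\<And>w. w \<in> {a..b} \<Longrightarrow> R w \<le> R v"
    using continuous_attains_sup[OF compact_Icc _ cont] ab by auto
  have "\<forall>w. R w \<le> R v"
  proof
    fix w
    show "R w \<le> R v"
    proof (cases "w \<in> {a..b}")
      case True then show ?thesis using v by auto
    next
      case False then show ?thesis using out[of w] v(2)[of 0] ab by auto
    qed
  qed
  then show ?thesis using v(1) unfolding R_def a_def b_def L_def by auto
qed

theorem lemma1:
  fixes Mu :: "'a measure" and q :: "'a \<Rightarrow> real"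
    and f :: "'b \<Rightarrow> 'a \<Rightarrow> real" and \<Theta> :: "'b set" and C :: real
    and n m :: nat and y r :: "nat \<Rightarrow> 'a"
  assumes q_meas: "q \<in> borel_measurable Mu"
    and q_pos: "\<And>x. x \<in> space Mu \<Longrightarrow> q x > 0"
    and q_prob: "(\<integral>\<^sup>+ x. ennreal (q x) \<partial>Mu) = 1"
    and f_meas: "\<And>\<theta>. \<theta> \<in> \<Theta> \<Longrightarrow> f \<theta> \<in> borel_measurable Mu"
    and f_bound: "\<And>\<theta> x. \<theta> \<in> \<Theta> \<Longrightarrow> x \<in> space Mu \<Longrightarrow> \<bar>f \<theta> x - ln (q x)\<bar> \<le> C"
    and y_in: "\<And>i. i \<in> {1..n} \<Longrightarrow> y i \<in> space Mu"
    and m_pos: "m \<ge> 1"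
    and r_in: "\<And>j. j \<in> {1..m} \<Longrightarrow> r j \<in> space Mu"
  shows "\<exists>a b::real. \<forall>\<theta>\<in>\<Theta>.
           (\<exists>\<nu>\<in>{a..b}. \<forall>\<nu>'. Mobj Mu (f \<theta>) n y \<nu>' \<le> Mobj Mu (f \<theta>) n y \<nu>) \<and>
           (\<exists>\<nu>\<in>{a..b}. \<forall>\<nu>'. Robj q (f \<theta>) n y m r \<nu>' \<le> Robj q (f \<theta>) n y m r \<nu>)"
proof (cases "n = 0")
  case True
  have M0: "Mobj Mu g n y v = 0" for g v unfolding Mobj_def using True by simp
  have R0: "Robj q g n y m r v = 0" for g v
    unfolding Robj_def using True q_pos r_in by (auto intro!: sum.neutral)
  show ?thesis by (rule exI[of _ 0], rule exI[of _ 0]) (simp add: M0 R0)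
next
  case False
  then have n1: "n \<ge> 1" by simp
  define C' where "C' = max C 0"
  define L where "L = real n * ln (1 + real m * exp C') + real m * ln (1 + real n * exp C')"
  show ?thesis
  proof (intro exI ballI conjI)
    fix \<theta> assume th: "\<theta> \<in> \<Theta>"
    obtain v where v: "v \<in> {-C..C}" "\<forall>v'. Mobj Mu (f \<theta>) n y v' \<le> Mobj Mu (f \<theta>) n y v"
      using M_part[OF q_meas q_pos q_prob f_meas[OF th] f_bound[OF th]] by blast
    show "\<exists>\<nu>\<in>{min (-C) (-C' - ln (real n) - L) .. max C (C' + ln (real m) + L)}.
            \<forall>\<nu>'. Mobj Mu (f \<theta>) n y \<nu>' \<le> Mobj Mu (f \<theta>) n y \<nu>"
      using v by (intro bexI[of _ v]) auto
    have "\<exists>\<nu>\<in>{-C' - ln (real n) - L .. C' + ln (real m) + L}.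
            \<forall>\<nu>'. Robj q (f \<theta>) n y m r \<nu>' \<le> Robj q (f \<theta>) n y m r \<nu>"
      unfolding L_def
    proof (rule R_part[OF n1 m_pos])
      show "0 \<le> C'" unfolding C'_def by simp
      show "q (y i) > 0" if "i \<in> {1..n}" for i using q_pos y_in that by blast
      show "q (r j) > 0" if "j \<in> {1..m}" for j using q_pos r_in that by blast
      show "\<bar>f \<theta> (y i) - ln (q (y i))\<bar> \<le> C'" if "i \<in> {1..n}" for i
        using f_bound[OF th y_in[OF that]] unfolding C'_def by simp
      show "\<bar>f \<theta> (r j) - ln (q (r j))\<bar> \<le> C'" if "j \<in> {1..m}" for j
        using f_bound[OF th r_in[OF that]] unfolding C'_def by simp
    qed
    then show "\<exists>\<nu>\<in>{min (-C) (-C' - ln (real n) - L) .. max C (C' + ln (real m) + L)}.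
            \<forall>\<nu>'. Robj q (f \<theta>) n y m r \<nu>' \<le> Robj q (f \<theta>) n y m r \<nu>"
      by (meson atLeastAtMost_iff max.coboundedI2 min.coboundedI2 order_trans)
  qed
qed

end
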